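(* Let $\mathbb{K}$ be a field of characteristic zero, let $\mathfrak{g}=(V,\mu)$ be a non-perfect Lie algebra over $\mathbb{K}$ with $\dim V=n$, and let $t\in\mathbb{K}\setminus\{0,1\}$. Then $$\dim\Omega(\mathfrak{g})\leq \widehat{\phi}_{n,t}(\mathfrak{g})\leq \dim\Omega(\mathfrak{g})+\dim L\big(\mathfrak{g}^{(2)};\mathcal{Z}(\mathfrak{g})\cap\mathfrak{g}^{(2)}\big).$$
   Context: $\mathfrak{g}^{(2)}$ is the linear span of all products $\mu(X,Y)$; non-perfect means $\mathfrak{g}^{(2)}\neq\mathfrak{g}$. $\mathcal{Z}(\mathfrak{g})=\{X:\mu(X,Y)=0\ \forall Y\}$ is the center. $L(U;W)$ is the space of linear maps $U\to W$. $\Omega(\mathfrak{g})=\{T\in L(V;V): \operatorname{Im}T\subseteq\mathcal{Z}(\mathfrak{g}),\ \mathfrak{g}^{(2)}\subseteq\operatorname{Ker}T\}$. $\widehat{\phi}_{n,t}(\mathfrak{g})=\dim\mathcal{D}(t,1,0)(\mathfrak{g})$, where $\mathcal{D}(t,1,0)(\mathfrak{g})$ is the space of linear maps $D:V\to V$ with $tD\mu(X,Y)=\mu(DX,Y)$ for all $X,Y\in V$. *)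

theory Defs
  imports Complex_Main "HOL-Library.Function_Algebras"
begin

definition fscale :: "('k \<Rightarrow> 'v \<Rightarrow> 'v) \<Rightarrow> 'k \<Rightarrow> ('u \<Rightarrow> 'v) \<Rightarrow> ('u \<Rightarrow> 'v)" where
  "fscale s c f = (\<lambda>x. s c (f x))"

text \<open>A Lie algebra g = (V, mu) over the field 'k, with V the whole type 'v
  (a vector space via scale): mu bilinear, alternating, Jacobi identity.\<close>
definition lie_algebra :: "('k::field \<Rightarrow> 'v::ab_group_add \<Rightarrow> 'v) \<Rightarrow> ('v \<Rightarrow> 'v \<Rightarrow> 'v) \<Rightarrow> bool" where
  "lie_algebra s mu \<longleftrightarrow> vector_space s
     \<and> (\<forall>y. Vector_Spaces.linear s s (\<lambda>x. mu x y))
     \<and> (\<forall>x. Vector_Spaces.linear s s (\<lambda>y. mu x y))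
     \<and> (\<forall>x. mu x x = 0)
     \<and> (\<forall>x y z. mu x (mu y z) + mu y (mu z x) + mu z (mu x y) = 0)"

definition derived :: "('k::field \<Rightarrow> 'v::ab_group_add \<Rightarrow> 'v) \<Rightarrow> ('v \<Rightarrow> 'v \<Rightarrow> 'v) \<Rightarrow> 'v set" where
  "derived s mu = module.span s {mu x y | x y. True}"

definition center :: "('v \<Rightarrow> 'v \<Rightarrow> 'v::zero) \<Rightarrow> 'v set" where
  "center mu = {x. \<forall>y. mu x y = 0}"

definition Omega :: "('k::field \<Rightarrow> 'v::ab_group_add \<Rightarrow> 'v) \<Rightarrow> ('v \<Rightarrow> 'v \<Rightarrow> 'v) \<Rightarrow> ('v \<Rightarrow> 'v) set" where
  "Omega s mu = {T. Vector_Spaces.linear s s T \<and> range T \<subseteq> center mu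
                   \<and> (\<forall>x\<in>derived s mu. T x = 0)}"

definition Dt10 :: "('k::field \<Rightarrow> 'v::ab_group_add \<Rightarrow> 'v) \<Rightarrow> ('v \<Rightarrow> 'v \<Rightarrow> 'v) \<Rightarrow> 'k \<Rightarrow> ('v \<Rightarrow> 'v) set" where
  "Dt10 s mu t = {D. Vector_Spaces.linear s s D \<and> (\<forall>x y. s t (D (mu x y)) = mu (D x) y)}"

text \<open>phi-hat_{n,t}(g) = dim D(t,1,0)(g) (n = dim V is determined by g).\<close>
definition phi_hat :: "('k::field \<Rightarrow> 'v::ab_group_add \<Rightarrow> 'v) \<Rightarrow> ('v \<Rightarrow> 'v \<Rightarrow> 'v) \<Rightarrow> 'k \<Rightarrow> nat" where
  "phi_hat s mu t = vector_space.dim (fscale s) (Dt10 s mu t)"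

text \<open>L(U;W) for subspaces U, W of V: linear maps U -> W, represented
  extensionally as maps on V that vanish outside U.\<close>
definition Lmaps :: "('k::field \<Rightarrow> 'v::ab_group_add \<Rightarrow> 'v) \<Rightarrow> 'v set \<Rightarrow> 'v set \<Rightarrow> ('v \<Rightarrow> 'v) set" where
  "Lmaps s U W = {f. (\<forall>x\<in>U. f x \<in> W)
                    \<and> (\<forall>x\<in>U. \<forall>y\<in>U. f (x + y) = f x + f y)
                    \<and> (\<forall>c. \<forall>x\<in>U. f (s c x) = s c (f x))
                    \<and> (\<forall>x. x \<notin> U \<longrightarrow> f x = 0)}"

end

theory Submission
  imports Defs
begin

lemma sum_fun_apply: "(sum f A) x = (\<Sum>a\<in>A. f a x)"
  by (induction A rule: infinite_finite_induct) auto

lemma fscale_vs: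
  assumes "vector_space s"
  shows "vector_space (fscale s :: 'k::field \<Rightarrow> ('u \<Rightarrow> 'v::ab_group_add) \<Rightarrow> ('u \<Rightarrow> 'v))"
  using assms unfolding vector_space_def fscale_def
  by (auto simp: fun_eq_iff)

lemma (in vector_space) fin_dim_card:
  assumes "independent A" "A \<subseteq> S" "S \<subseteq> span F" "finite F"
  shows "card A \<le> dim S"
proof -
  obtain B where B: "B \<subseteq> S" "independent B" "S \<subseteq> span B" "card B = dim S"
    using basis_exists by blast
  have "finite B" using independent_span_bound[OF assms(4) B(2)] B(1) assms(3) by blast
  then show ?thesis using independent_span_bound[OF _ assms(1)] B assms(2) by fastforce
qed

lemma (in vector_space) span_disjoint:
  assumes "finite E" "independent (C \<union> E)" "C \<inter> E = {}" "x \<in> span C" "x \<in> span E"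
  shows "x = 0"
  using assms
proof (induction E arbitrary: x rule: finite_induct)
  case empty
  then show ?case by simp
next
  case (insert a E x)
  obtain k where k: "x - k *s a \<in> span E"
    using insert.prems(4) span_breakdown_eq by blast
  show ?case
  proof (cases "k = 0")
    case True
    have "independent (C \<union> E)" using insert.prems(1) by (rule independent_mono) auto
    moreover have "x \<in> span E" using k True by simp
    moreover have "C \<inter> E = {}" using insert.prems(2) by blast
    ultimately show ?thesis using insert.IH insert.prems(3) by blast
  next
    case False
    have "x - k *s a \<in> span (C \<union> E)" using k span_mono[of E "C \<union> E"] by blast
    moreover have "x \<in> span (C \<union> E)" using insert.prems(3) span_mono[of C "C \<union> E"] by blast
    ultimately have "x - (x - k *s a) \<in> span (C \<union> E)"
      using span_diff by blast
    moreover have "x - (x - k *s a) = k *s a" by (simp add: algebra_simps)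
    ultimately have "k *s a \<in> span (C \<union> E)" by simp
    then have "(inverse k) *s (k *s a) \<in> span (C \<union> E)" by (rule span_scale)
    then have "a \<in> span (C \<union> E)" using False by simp
    moreover have "C \<union> E \<subseteq> C \<union> insert a E - {a}" using insert by auto
    ultimately have "a \<in> span (C \<union> insert a E - {a})" using span_mono by blast
    then show ?thesis using insert.prems(1) dependent_def by auto
  qed
qed

lemma (in vector_space) sum_onU:
  assumes "subspace U" "finite A" "A \<subseteq> U"
    and add: "\<forall>x\<in>U. \<forall>y\<in>U. f (x + y) = f x + f y"
    and sc: "\<forall>c. \<forall>x\<in>U. f (c *s x) = c *s (f x)"
    and z: "f 0 = 0"
  shows "f (\<Sum>b\<in>A. a b *s b) = (\<Sum>b\<in>A. a b *s f b)"
  using assms(2,3)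
proof (induction A rule: finite_induct)
  case empty
  then show ?case using z by simp
next
  case (insert x F)
  have "(\<Sum>b\<in>F. a b *s b) \<in> U" using insert assms(1) by (auto intro!: subspace_sum subspace_scale)
  moreover have "a x *s x \<in> U" using insert assms(1) by (auto intro!: subspace_scale)
  ultimately show ?case using insert add sc by simp
qed

lemma lie_facts:
  assumes "lie_algebra s mu"
  shows "vector_space s"
    and "\<And>a b c. mu (a + b) c = mu a c + mu b c"
    and "\<And>a b c. mu a (b + c) = mu a b + mu a c"
    and "\<And>k a b. mu (s k a) b = s k (mu a b)"
    and "\<And>k a b. mu a (s k b) = s k (mu a b)"
    and "\<And>a. mu a a = 0"
    and "\<And>x y z. mu x (mu y z) + mu y (mu z x) + mu z (mu x y) = 0"
  using assms unfolding lie_algebra_def Vector_Spaces.linear_iff by auto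

lemma lie_more:
  assumes "lie_algebra s mu"
  shows "\<And>a b. mu a b = - mu b a" and "\<And>b. mu 0 b = 0" and "\<And>a. mu a 0 = 0"
    and "\<And>x y z. mu (mu x y) z + mu (mu y z) x + mu (mu z x) y = 0"
proof -
  note f = lie_facts[OF assms]
  interpret vector_space s by (fact f(1))
  show z: "mu 0 b = 0" for b using f(4)[of 0 0 b] by simp
  show "mu a 0 = 0" for a using f(5)[of a 0 0] by simp
  show a: "mu a b = - mu b a" for a b
  proof -
    have "0 = mu (a + b) (a + b)" by (simp add: f(6))
    also have "\<dots> = mu b a + mu a b" by (simp only: f(2) f(3) f(6)[of a] f(6)[of b] add_0_left add_0_right)
    also have "\<dots> = mu a b + mu b a" by (rule add.commute)
    finally have "mu a b + mu b a = 0" by (rule sym)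
    then show ?thesis by (simp add: eq_neg_iff_add_eq_0)
  qed
  show "mu (mu x y) z + mu (mu y z) x + mu (mu z x) y = 0" for x y z
  proof -
    have "mu (mu x y) z + mu (mu y z) x + mu (mu z x) y = - mu z (mu x y) + - mu x (mu y z) + - mu y (mu z x)"
      using a[of "mu y z" x] a[of "mu z x" y] a[of "mu x y" z] by simp
    also have "\<dots> = - (mu x (mu y z) + mu y (mu z x) + mu z (mu x y))" by (simp add: algebra_simps)
    also have "\<dots> = 0" using f(7) by simp
    finally show ?thesis .
  qed
qed

lemma key_zero:
  assumes lie: "lie_algebra s mu" and lin: "Vector_Spaces.linear s s D"
    and hD: "\<forall>x y. s t (D (mu x y)) = mu (D x) y" and t0: "t \<noteq> 0" and t1: "t \<noteq> 1"
  shows "D (mu (mu y z) x) = 0"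
proof -
  note f = lie_facts[OF lie] and g = lie_more[OF lie]
  interpret vector_space s by (fact f(1))
  have Dadd: "D (a + b) = D a + D b" and Dsc: "D (s k a) = s k (D a)" for a b k
    using lin unfolding Vector_Spaces.linear_iff by auto
  have Dneg: "D (- a) = - D a" for a using Dsc[of "-1" a] by simp
  have P1: "s t (D (mu a b)) = mu (D a) b" for a b using hD by auto
  have P2: "s t (D (mu a b)) = mu a (D b)" for a b
  proof -
    have "s t (D (mu a b)) = s t (D (- mu b a))" using g(1)[of a b] by simp
    also have "\<dots> = - s t (D (mu b a))" using Dneg by simp
    also have "\<dots> = - mu (D b) a" by (simp only: P1)
    also have "\<dots> = mu a (D b)" using g(1)[of "D b" a] by simp
    finally show ?thesis .
  qed
  define a where "a = D (mu (mu x y) z)"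
  define b where "b = D (mu (mu y z) x)"
  define c where "c = D (mu (mu z x) y)"
  have D0: "D 0 = 0" using Dsc[of 0 0] by simp
  have "a + b + c = D (mu (mu x y) z + mu (mu y z) x + mu (mu z x) y)"
    unfolding a_def b_def c_def by (simp only: Dadd)
  then have e1: "a + b + c = 0" using g(4)[of x y z] D0 by simp
  have ea: "s (t*t) a = mu (mu (D x) y) z"
  proof -
    have "s (t*t) a = s t (s t (D (mu (mu x y) z)))" unfolding a_def by simp
    also have "\<dots> = s t (mu (D (mu x y)) z)" by (simp only: P1)
    also have "\<dots> = mu (s t (D (mu x y))) z" by (simp only: f(4))
    also have "\<dots> = mu (mu (D x) y) z" by (simp only: P1)
    finally show ?thesis .
  qed
  have eb: "s t b = mu (mu y z) (D x)" unfolding b_def by (rule P2)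
  have ec: "s (t*t) c = mu (mu z (D x)) y"
  proof -
    have "s (t*t) c = s t (s t (D (mu (mu z x) y)))" unfolding c_def by simp
    also have "\<dots> = s t (mu (D (mu z x)) y)" by (simp only: P1)
    also have "\<dots> = mu (s t (D (mu z x))) y" by (simp only: f(4))
    also have "\<dots> = mu (mu z (D x)) y" by (simp only: P2)
    finally show ?thesis .
  qed
  have "s (t*t) a + s t b + s (t*t) c = 0" using ea eb ec g(4)[of "D x" y z] by simp
  then have "s t (s t a + b + s t c) = 0" by (simp add: scale_right_distrib)
  then have e2: "s t a + b + s t c = 0" using t0 by simp
  have "s t a + b + s t c - (a + b + c) = 0" using e1 e2 by simp
  then have "s (t - 1) (a + c) = 0" by (simp add: algebra_simps)
  then have "a + c = 0" using t1 by simp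
  moreover have "b = (a + b + c) - (a + c)" by (simp add: algebra_simps)
  ultimately have "b = 0" using e1 by simp
  then show ?thesis unfolding b_def .
qed


lemma Dt_maps:
  assumes lie: "lie_algebra s mu" and D: "D \<in> Dt10 s mu t" and t0: "t \<noteq> 0" and t1: "t \<noteq> 1"
    and x: "x \<in> derived s mu"
  shows "D x \<in> center mu \<inter> derived s mu"
proof -
  note f = lie_facts[OF lie] and g = lie_more[OF lie]
  interpret vector_space s by (fact f(1))
  have lin: "Vector_Spaces.linear s s D" and hD: "\<forall>x y. s t (D (mu x y)) = mu (D x) y"
    using D unfolding Dt10_def by auto
  have Dadd: "D (a + b) = D a + D b" and Dsc: "D (s k a) = s k (D a)" for a b k
    using lin unfolding Vector_Spaces.linear_iff by auto
  have D0: "D 0 = 0" using Dsc[of 0 0] by simp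
  have subC: "subspace (center mu)"
    unfolding subspace_def center_def using g(2) f(2) f(4) by auto
  have subW: "subspace (center mu \<inter> derived s mu)"
    unfolding derived_def by (intro subspace_inter subC subspace_span)
  have subS: "subspace {x. D x \<in> center mu \<inter> derived s mu}"
    unfolding subspace_def using D0 Dadd Dsc subspace_0[OF subW] subspace_add[OF subW] subspace_scale[OF subW]
    by simp
  have gen: "D (mu p q) \<in> center mu \<inter> derived s mu" for p q
  proof
    show "D (mu p q) \<in> center mu"
      unfolding center_def
    proof (intro CollectI allI)
      fix z
      have "mu (D (mu p q)) z = s t (D (mu (mu p q) z))" using hD by simp
      also have "\<dots> = 0" using key_zero[OF lie lin hD t0 t1, of p q z] by simp
      finally show "mu (D (mu p q)) z = 0" .
    qed
    have "D (mu p q) = s (inverse t) (s t (D (mu p q)))" using t0 by simp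
    also have "\<dots> = s (inverse t) (mu (D p) q)" using hD by simp
    moreover have "mu (D p) q \<in> span {mu x y | x y. True}" by (rule span_base) auto
    then have "s (inverse t) (mu (D p) q) \<in> span {mu x y | x y. True}" by (rule span_scale)
    ultimately show "D (mu p q) \<in> derived s mu"
      unfolding derived_def by simp
  qed
  have "derived s mu \<subseteq> {x. D x \<in> center mu \<inter> derived s mu}"
    unfolding derived_def
    by (rule span_minimal) (use gen[unfolded derived_def] subS[unfolded derived_def] in auto)
  then show ?thesis using x by auto
qed

lemma (in vector_space) fun_span:
  assumes "finite BU" "finite BV" "independent BV" "span BV = UNIV"
    and fx: "\<And>x. f x = (\<Sum>b\<in>BU. c x b *s f b)"
  shows "f \<in> module.span (fscale scale) ((\<lambda>(b,e). \<lambda>x. c x b *s e) ` (BU \<times> BV))"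
proof -
  interpret F: vector_space "fscale scale" by (rule fscale_vs) (rule vector_space_axioms)
  let ?g = "\<lambda>(b,e). \<lambda>x. c x b *s e"
  let ?r = "\<lambda>p. representation BV (f (fst p)) (snd p)"
  have rep: "(\<Sum>e\<in>BV. representation BV v e *s e) = v" for v
    using assms by (intro sum_representation_eq) auto
  have "f = (\<Sum>p\<in>BU \<times> BV. fscale scale (?r p) (?g p))"
  proof (rule ext)
    fix x
    have "(\<Sum>p\<in>BU \<times> BV. fscale scale (?r p) (?g p)) x
        = (\<Sum>p\<in>BU \<times> BV. representation BV (f (fst p)) (snd p) *s (c x (fst p) *s snd p))"
      by (simp add: sum_fun_apply fscale_def split_def)
    also have "\<dots> = (\<Sum>b\<in>BU. \<Sum>e\<in>BV. representation BV (f b) e *s (c x b *s e))"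
      by (simp add: sum.cartesian_product split_def)
    also have "\<dots> = (\<Sum>b\<in>BU. c x b *s (\<Sum>e\<in>BV. representation BV (f b) e *s e))"
      by (simp add: scale_sum_right mult.commute)
    also have "\<dots> = f x" using fx[of x] rep by simp
    finally show "f x = (\<Sum>p\<in>BU \<times> BV. fscale scale (?r p) (?g p)) x" by simp
  qed
  also have "\<dots> \<in> F.span (?g ` (BU \<times> BV))"
    by (intro F.span_sum F.span_scale F.span_base) auto
  finally show ?thesis .
qed


lemma Dt_subspace:
  assumes lie: "lie_algebra s mu"
  shows "module.subspace (fscale s) (Dt10 s mu t)"
proof -
  note f = lie_facts[OF lie] and g = lie_more[OF lie]
  interpret vector_space s by (fact f(1))
  interpret F: vector_space "fscale s" by (rule fscale_vs) (fact f(1))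
  show ?thesis
    unfolding F.subspace_def
  proof (intro conjI ballI allI)
    show "0 \<in> Dt10 s mu t"
      unfolding Dt10_def using f(1) g(2) by (simp add: Vector_Spaces.linear_iff)
  next
    fix D1 D2 assume D1: "D1 \<in> Dt10 s mu t" and D2: "D2 \<in> Dt10 s mu t"
    then have l1: "Vector_Spaces.linear s s D1" and l2: "Vector_Spaces.linear s s D2"
      and h1: "\<forall>x y. s t (D1 (mu x y)) = mu (D1 x) y" and h2: "\<forall>x y. s t (D2 (mu x y)) = mu (D2 x) y"
      unfolding Dt10_def by auto
    have "Vector_Spaces.linear s s (D1 + D2)"
      using l1 l2 unfolding Vector_Spaces.linear_iff by (simp add: scale_right_distrib)
    moreover have "s t ((D1 + D2) (mu x y)) = mu ((D1 + D2) x) y" for x y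
      using h1 h2 by (simp add: scale_right_distrib f(2))
    ultimately show "D1 + D2 \<in> Dt10 s mu t" unfolding Dt10_def by auto
  next
    fix c D assume D: "D \<in> Dt10 s mu t"
    then have l: "Vector_Spaces.linear s s D"
      and h: "\<forall>x y. s t (D (mu x y)) = mu (D x) y"
      unfolding Dt10_def by auto
    have "Vector_Spaces.linear s s (fscale s c D)"
      using l unfolding Vector_Spaces.linear_iff fscale_def by (simp add: scale_right_distrib scale_left_commute)
    moreover have "s t (fscale s c D (mu x y)) = mu (fscale s c D x) y" for x y
    proof -
      have "s t (s c (D (mu x y))) = s c (s t (D (mu x y)))" by (rule scale_left_commute)
      also have "\<dots> = s c (mu (D x) y)" using h by simp
      also have "\<dots> = mu (s c (D x)) y" by (simp only: f(4))
      finally show ?thesis unfolding fscale_def .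
    qed
    ultimately show "fscale s c D \<in> Dt10 s mu t" unfolding Dt10_def by auto
  qed
qed


theorem theorem4p1:
  fixes scale :: "'k::field_char_0 \<Rightarrow> 'v::ab_group_add \<Rightarrow> 'v"
    and mu :: "'v \<Rightarrow> 'v \<Rightarrow> 'v"
    and n :: nat and t :: 'k
  assumes lie: "lie_algebra scale mu"
    and fin: "\<exists>B. finite B \<and> module.span scale B = UNIV"
    and dimV: "vector_space.dim scale (UNIV :: 'v set) = n"
    and nonperfect: "derived scale mu \<noteq> UNIV"
    and t0: "t \<noteq> 0" and t1: "t \<noteq> 1"
  shows "vector_space.dim (fscale scale) (Omega scale mu) \<le> phi_hat scale mu t
       \<and> phi_hat scale mu t \<le> vector_space.dim (fscale scale) (Omega scale mu)
            + vector_space.dim (fscale scale)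
                (Lmaps scale (derived scale mu) (center mu \<inter> derived scale mu))"
proof -
  note f = lie_facts[OF lie] and g = lie_more[OF lie]
  interpret V: vector_space scale by (fact f(1))
  interpret F: vector_space "fscale scale" by (rule fscale_vs) (fact f(1))
  obtain B0 where B0: "finite B0" "V.span B0 = UNIV" using fin by blast
  obtain B where B: "V.independent B" "UNIV \<subseteq> V.span B"
    using V.basis_exists[of UNIV] by blast
  have finB: "finite B" using V.independent_span_bound[OF B0(1) B(1)] B0(2) by auto
  have spanB: "V.span B = UNIV" using B(2) by auto
  define G1 where "G1 = (\<lambda>(b,e). \<lambda>x. scale (V.representation B x b) e) ` (B \<times> B)"
  have finG1: "finite G1" unfolding G1_def using finB by simp
  have Lin: "T \<in> F.span G1" if T: "Vector_Spaces.linear scale scale T" for T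
  proof -
    have Tadd: "T (x + y) = T x + T y" and Tsc: "T (scale c x) = scale c (T x)" for x y c
      using T unfolding Vector_Spaces.linear_iff by auto
    have T0: "T 0 = 0" using Tsc[of 0 0] by simp
    have "T x = (\<Sum>b\<in>B. scale (V.representation B x b) (T b))" for x
    proof -
      have "x = (\<Sum>b\<in>B. scale (V.representation B x b) b)"
        using V.sum_representation_eq[of B x B] B(1) spanB finB by auto
      then have "T x = T (\<Sum>b\<in>B. scale (V.representation B x b) b)" by simp
      also have "\<dots> = (\<Sum>b\<in>B. scale (V.representation B x b) (T b))"
        by (rule V.sum_onU[OF V.subspace_UNIV finB]) (auto simp: Tadd Tsc T0)
      finally show ?thesis .
    qed
    then show ?thesis unfolding G1_def
      by (intro V.fun_span[where c = "\<lambda>x b. V.representation B x b", OF finB finB B(1) spanB])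
  qed
  have DtLin: "Dt10 scale mu t \<subseteq> F.span G1" using Lin unfolding Dt10_def by auto
  have OmLin: "Omega scale mu \<subseteq> F.span G1" using Lin unfolding Omega_def by auto
  have OmDt: "Omega scale mu \<subseteq> Dt10 scale mu t"
  proof
    fix T assume T: "T \<in> Omega scale mu"
    have "mu x y \<in> derived scale mu" for x y
      unfolding derived_def by (rule V.span_base) auto
    then show "T \<in> Dt10 scale mu t"
      using T unfolding Omega_def Dt10_def center_def by (auto simp: image_subset_iff)
  qed
  obtain A where A: "A \<subseteq> Omega scale mu" "F.independent A" "Omega scale mu \<subseteq> F.span A"
      "card A = F.dim (Omega scale mu)"
    using F.basis_exists by blast
  have p1: "F.dim (Omega scale mu) \<le> F.dim (Dt10 scale mu t)"
    using F.fin_dim_card[OF A(2) _ DtLin finG1] A(1,4) OmDt by auto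
  have subU: "V.subspace (derived scale mu)" unfolding derived_def by simp
  obtain BU where BU: "BU \<subseteq> derived scale mu" "V.independent BU" "derived scale mu \<subseteq> V.span BU"
    using V.maximal_independent_subset by blast
  have finBU: "finite BU" using V.independent_span_bound[OF finB BU(2)] spanB by auto
  define G2 where "G2 = (\<lambda>(b,e). \<lambda>x. scale (if x \<in> derived scale mu then V.representation BU x b else 0) e) ` (BU \<times> B)"
  have finG2: "finite G2" unfolding G2_def using finB finBU by simp
  have LmSpan: "Lmaps scale (derived scale mu) (center mu \<inter> derived scale mu) \<subseteq> F.span G2"
  proof
    fix h assume h: "h \<in> Lmaps scale (derived scale mu) (center mu \<inter> derived scale mu)"
    have hadd: "\<forall>x\<in>derived scale mu. \<forall>y\<in>derived scale mu. h (x + y) = h x + h y"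
      and hsc: "\<forall>c. \<forall>x\<in>derived scale mu. h (scale c x) = scale c (h x)"
      and hout: "\<And>x. x \<notin> derived scale mu \<Longrightarrow> h x = 0"
      using h unfolding Lmaps_def by auto
    have h0: "h 0 = 0" using hsc V.subspace_0[OF subU] by (metis V.scale_zero_left)
    have "h x = (\<Sum>b\<in>BU. scale (if x \<in> derived scale mu then V.representation BU x b else 0) (h b))" for x
    proof (cases "x \<in> derived scale mu")
      case True
      have "x = (\<Sum>b\<in>BU. scale (V.representation BU x b) b)"
        using V.sum_representation_eq[of BU x BU] BU True finBU by auto
      then have "h x = h (\<Sum>b\<in>BU. scale (V.representation BU x b) b)" by simp
      also have "\<dots> = (\<Sum>b\<in>BU. scale (V.representation BU x b) (h b))"
        by (rule V.sum_onU[OF subU finBU BU(1) hadd hsc h0])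
      finally show ?thesis using True by simp
    next
      case False
      then show ?thesis using hout by simp
    qed
    then show "h \<in> F.span G2" unfolding G2_def
      by (intro V.fun_span[where c = "\<lambda>x b. if x \<in> derived scale mu then V.representation BU x b else 0", OF finBU finB B(1) spanB])
  qed
  define R where "R = (\<lambda>h::'v \<Rightarrow> 'v. \<lambda>x. if x \<in> derived scale mu then h x else 0)"
  have linR: "Vector_Spaces.linear (fscale scale) (fscale scale) R"
    unfolding Vector_Spaces.linear_iff
  proof (intro conjI allI)
    show "vector_space (fscale scale)" by (rule F.vector_space_axioms)
    show "vector_space (fscale scale)" by (rule F.vector_space_axioms)
    show "R (x + y) = R x + R y" for x y unfolding R_def by (auto simp: fun_eq_iff)
    show "R (fscale scale c x) = fscale scale c (R x)" for c x
      unfolding R_def fscale_def by (auto simp: fun_eq_iff)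
  qed
  interpret RL: Vector_Spaces.linear "fscale scale" "fscale scale" R by (fact linR)
  have subDt: "F.subspace (Dt10 scale mu t)" by (rule Dt_subspace[OF lie])
  define K where "K = {D \<in> Dt10 scale mu t. R D = 0}"
  have KOm: "K \<subseteq> Omega scale mu"
  proof
    fix D assume D: "D \<in> K"
    then have DD: "D \<in> Dt10 scale mu t" and RD: "R D = 0" unfolding K_def by auto
    have lin: "Vector_Spaces.linear scale scale D" and hD: "\<forall>x y. scale t (D (mu x y)) = mu (D x) y"
      using DD unfolding Dt10_def by auto
    have kill: "D x = 0" if "x \<in> derived scale mu" for x
      using fun_cong[OF RD, of x] that unfolding R_def by simp
    have "mu x y \<in> derived scale mu" for x y
      unfolding derived_def by (rule V.span_base) auto
    then have "mu (D x) y = 0" for x y using hD kill by (metis V.scale_zero_right)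
    then show "D \<in> Omega scale mu"
      unfolding Omega_def center_def using lin kill by auto
  qed
  obtain C where C: "C \<subseteq> K" "F.independent C" "K \<subseteq> F.span C"
    using F.maximal_independent_subset by blast
  have CDt: "C \<subseteq> Dt10 scale mu t" using C(1) unfolding K_def by auto
  obtain Bd where Bd: "C \<subseteq> Bd" "Bd \<subseteq> Dt10 scale mu t" "F.independent Bd" "Dt10 scale mu t \<subseteq> F.span Bd"
    using F.maximal_independent_subset_extend[OF CDt C(2)] by blast
  have finBd: "finite Bd" using F.independent_span_bound[OF finG1 Bd(3)] Bd(2) DtLin by auto
  have dimDt: "F.dim (Dt10 scale mu t) = card Bd"
    using F.basis_card_eq_dim[OF Bd(2) Bd(4) Bd(3)] by simp
  define E where "E = Bd - C"
  have BdCE: "Bd = C \<union> E" and CE: "C \<inter> E = {}" using Bd(1) unfolding E_def by auto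
  have finE: "finite E" and finC: "finite C" using finBd BdCE by auto
  have cardBd: "card Bd = card C + card E" using BdCE CE finE finC card_Un_disjoint by metis
  have cardC: "card C \<le> F.dim (Omega scale mu)"
    using F.fin_dim_card[OF C(2) _ OmLin finG1] C(1) KOm by auto
  have spanE_Dt: "F.span E \<subseteq> Dt10 scale mu t"
  proof -
    have "E \<subseteq> Dt10 scale mu t" using Bd(2) unfolding E_def by auto
    then show ?thesis using F.span_minimal[OF _ subDt] by blast
  qed
  have inj: "inj_on R (F.span E)"
    unfolding RL.inj_on_iff_eq_0[OF F.subspace_span]
  proof (intro ballI impI)
    fix x assume xE: "x \<in> F.span E" and Rx: "R x = 0"
    then have "x \<in> K" using spanE_Dt unfolding K_def by auto
    then have xC: "x \<in> F.span C" using C(3) by auto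
    show "x = 0"
      using F.span_disjoint[OF finE _ CE xC xE] Bd(3) BdCE by simp
  qed
  have indE: "F.independent E" using Bd(3) unfolding E_def by (rule F.independent_mono) auto
  have indRE: "F.independent (R ` E)" by (rule RL.independent_injective_image[OF indE inj])
  have cardRE: "card (R ` E) = card E"
    by (rule card_image[OF inj_on_subset[OF inj F.span_superset]])
  have RE_Lm: "R ` E \<subseteq> Lmaps scale (derived scale mu) (center mu \<inter> derived scale mu)"
  proof
    fix h assume "h \<in> R ` E"
    then obtain D where D: "D \<in> E" and hD: "h = R D" by blast
    have DD: "D \<in> Dt10 scale mu t" using D Bd(2) unfolding E_def by auto
    have lin: "Vector_Spaces.linear scale scale D" using DD unfolding Dt10_def by auto
    have Dadd: "D (x + y) = D x + D y" and Dsc: "D (scale c x) = scale c (D x)" for x y c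
      using lin unfolding Vector_Spaces.linear_iff by auto
    have maps: "D x \<in> center mu \<inter> derived scale mu" if "x \<in> derived scale mu" for x
      by (rule Dt_maps[OF lie DD t0 t1 that])
    show "h \<in> Lmaps scale (derived scale mu) (center mu \<inter> derived scale mu)"
      unfolding Lmaps_def hD R_def
      using maps Dadd Dsc V.subspace_add[OF subU] V.subspace_scale[OF subU] by auto
  qed
  have cardLm: "card (R ` E) \<le> F.dim (Lmaps scale (derived scale mu) (center mu \<inter> derived scale mu))"
    by (rule F.fin_dim_card[OF indRE RE_Lm LmSpan finG2])
  have p2: "F.dim (Dt10 scale mu t) \<le> F.dim (Omega scale mu)
      + F.dim (Lmaps scale (derived scale mu) (center mu \<inter> derived scale mu))"
    using dimDt cardBd cardC cardLm cardRE by linarith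
  show ?thesis unfolding phi_hat_def using p1 p2 by simp
qed

end
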